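(* The Sex-Equal matching mechanism $SE$ and the Egalitarian Stable matching mechanism $ES$ are symmetric (i.e. $G^*$-symmetric).
   Context: Fix $n\ge 2$, $W=\{1,\dots,n\}$, $M=\{n+1,\dots,2n\}$, $I=W\cup M$. Permutations compose right-to-left. A preference profile is a function $p$ on $I$ assigning to each $x\in W$ a linear order $p(x)$ on $M$ and to each $y\in M$ a linear order $p(y)$ on $W$; $\mathcal{P}$ is the set of preference profiles. For a linear order $R$ on $X$ and $a\in X$, $\mathrm{Rank}_R(a)=|\{b\in X:b\succeq_R a\}|$. A matching is a permutation $\mu$ of $I$ with $\mu(W)=M$, $\mu(M)=W$, $\mu(\mu(z))=z$; $\mathcal{M}$ is the set of matchings. $\mu$ is stable for $p$ if there is no $(x,y)\in W\times M$ with $y\succ_{p(x)}\mu(x)$ and $x\succ_{p(y)}\mu(y)$; $ST(p)$ is the set of matchings stable for $p$. Let $\delta(p,\mu)=\left|\sum_{x\in W}\mathrm{Rank}_{p(x)}(\mu(x))-\sum_{y\in M}\mathrm{Rank}_{p(y)}(\mu(y))\right|$ and $e(p,\mu)=\sum_{x\in W}\mathrm{Rank}_{p(x)}(\mu(x))+\sum_{y\in M}\mathrm{Rank}_{p(y)}(\mu(y))$. $SE(p)=\arg\min_{\mu\in ST(p)}\delta(p,\mu)$ and $ES(p)=\arg\min_{\mu\in ST(p)}e(p,\mu)$. $G^*=\{\varphi\in\mathrm{Sym}(I):\{\varphi(W),\varphi(M)\}=\{W,M\}\}$. For a linear order $R$ on $X\subseteq I$ and $\varphi\in\mathrm{Sym}(I)$,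 $\varphi R$ is the relation on $\varphi(X)$ with $(a,b)\in\varphi R$ iff $(\varphi^{-1}(a),\varphi^{-1}(b))\in R$. For $\varphi\in G^*$, $p^\varphi(z)=\varphi\,p(\varphi^{-1}(z))$; $\mu^\varphi=\varphi\mu\varphi^{-1}$; $S^\varphi=\{\mu^\varphi:\mu\in S\}$. A matching mechanism (correspondence $F$ from $\mathcal{P}$ to $\mathcal{M}$) is symmetric if $F(p^\varphi)=F(p)^\varphi$ for all $p\in\mathcal{P}$, $\varphi\in G^*$. *)

theory Defs
  imports Main "HOL-Combinatorics.Permutations"
begin

definition Wset :: "nat \<Rightarrow> nat set" where "Wset n = {1..n}"
definition Mset :: "nat \<Rightarrow> nat set" where "Mset n = {n+1..2*n}"
definition Iset :: "nat \<Rightarrow> nat set" where "Iset n = Wset n \<union> Mset n"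

(* A linear order R on X is a relation (library notion linear_order_on X R);
   convention: (a,b) \<in> R means "a is weakly preferred to b", i.e. a \<succeq>_R b. *)

definition Rank :: "nat set \<Rightarrow> nat rel \<Rightarrow> nat \<Rightarrow> nat" where
  "Rank X R a = card {b \<in> X. (b, a) \<in> R}"

definition spref :: "nat rel \<Rightarrow> nat \<Rightarrow> nat \<Rightarrow> bool" where
  "spref R a b \<longleftrightarrow> (a, b) \<in> R \<and> a \<noteq> b"

definition profiles :: "nat \<Rightarrow> (nat \<Rightarrow> nat rel) set" where
  "profiles n = {p. (\<forall>x\<in>Wset n. linear_order_on (Mset n) (p x))
                   \<and> (\<forall>y\<in>Mset n. linear_order_on (Wset n) (p y))
                   \<and> (\<forall>z. z \<notin> Iset n \<longrightarrow> p z = {})}"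

definition matchings :: "nat \<Rightarrow> (nat \<Rightarrow> nat) set" where
  "matchings n = {\<mu>. \<mu> permutes Iset n \<and> \<mu> ` Wset n = Mset n \<and> \<mu> ` Mset n = Wset n
                    \<and> (\<forall>z\<in>Iset n. \<mu> (\<mu> z) = z)}"

definition stable :: "nat \<Rightarrow> (nat \<Rightarrow> nat rel) \<Rightarrow> (nat \<Rightarrow> nat) \<Rightarrow> bool" where
  "stable n p \<mu> \<longleftrightarrow> \<not> (\<exists>x\<in>Wset n. \<exists>y\<in>Mset n.
      spref (p x) y (\<mu> x) \<and> spref (p y) x (\<mu> y))"

definition ST :: "nat \<Rightarrow> (nat \<Rightarrow> nat rel) \<Rightarrow> (nat \<Rightarrow> nat) set" where
  "ST n p = {\<mu> \<in> matchings n. stable n p \<mu>}"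

definition wsum :: "nat \<Rightarrow> (nat \<Rightarrow> nat rel) \<Rightarrow> (nat \<Rightarrow> nat) \<Rightarrow> nat" where
  "wsum n p \<mu> = (\<Sum>x\<in>Wset n. Rank (Mset n) (p x) (\<mu> x))"

definition msum :: "nat \<Rightarrow> (nat \<Rightarrow> nat rel) \<Rightarrow> (nat \<Rightarrow> nat) \<Rightarrow> nat" where
  "msum n p \<mu> = (\<Sum>y\<in>Mset n. Rank (Wset n) (p y) (\<mu> y))"

definition delta :: "nat \<Rightarrow> (nat \<Rightarrow> nat rel) \<Rightarrow> (nat \<Rightarrow> nat) \<Rightarrow> int" where
  "delta n p \<mu> = \<bar>int (wsum n p \<mu>) - int (msum n p \<mu>)\<bar>"

definition egal :: "nat \<Rightarrow> (nat \<Rightarrow> nat rel) \<Rightarrow> (nat \<Rightarrow> nat) \<Rightarrow> nat" where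
  "egal n p \<mu> = wsum n p \<mu> + msum n p \<mu>"

definition SE :: "nat \<Rightarrow> (nat \<Rightarrow> nat rel) \<Rightarrow> (nat \<Rightarrow> nat) set" where
  "SE n p = {\<mu> \<in> ST n p. \<forall>\<nu>\<in>ST n p. delta n p \<mu> \<le> delta n p \<nu>}"

definition ES :: "nat \<Rightarrow> (nat \<Rightarrow> nat rel) \<Rightarrow> (nat \<Rightarrow> nat) set" where
  "ES n p = {\<mu> \<in> ST n p. \<forall>\<nu>\<in>ST n p. egal n p \<mu> \<le> egal n p \<nu>}"

definition Gstar :: "nat \<Rightarrow> (nat \<Rightarrow> nat) set" where
  "Gstar n = {\<phi>. \<phi> permutes Iset n \<and> {\<phi> ` Wset n, \<phi> ` Mset n} = {Wset n, Mset n}}"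

definition rel_act :: "(nat \<Rightarrow> nat) \<Rightarrow> nat rel \<Rightarrow> nat rel" where
  "rel_act \<phi> R = {(a, b). (inv \<phi> a, inv \<phi> b) \<in> R}"

definition prof_act :: "(nat \<Rightarrow> nat) \<Rightarrow> (nat \<Rightarrow> nat rel) \<Rightarrow> (nat \<Rightarrow> nat rel)" where
  "prof_act \<phi> p = (\<lambda>z. rel_act \<phi> (p (inv \<phi> z)))"

definition match_act :: "(nat \<Rightarrow> nat) \<Rightarrow> (nat \<Rightarrow> nat) \<Rightarrow> (nat \<Rightarrow> nat)" where
  "match_act \<phi> \<mu> = \<phi> \<circ> \<mu> \<circ> inv \<phi>"

definition symmetric_mech :: "nat \<Rightarrow> ((nat \<Rightarrow> nat rel) \<Rightarrow> (nat \<Rightarrow> nat) set) \<Rightarrow> bool" where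
  "symmetric_mech n F \<longleftrightarrow> (\<forall>p\<in>profiles n. \<forall>\<phi>\<in>Gstar n.
      F (prof_act \<phi> p) = match_act \<phi> ` F p)"

end

theory Submission
  imports Defs
begin

lemma Gstar_cases:
  assumes "\<phi> \<in> Gstar n"
  shows "\<phi> permutes Iset n \<and> ((\<phi>`Wset n = Wset n \<and> \<phi>`Mset n = Mset n) \<or> (\<phi>`Wset n = Mset n \<and> \<phi>`Mset n = Wset n))"
  using assms unfolding Gstar_def by (auto simp: doubleton_eq_iff)

lemma Gstar_inv:
  assumes "\<phi> \<in> Gstar n"
  shows "inv \<phi> \<in> Gstar n"
proof -
  from Gstar_cases[OF assms] have p: "\<phi> permutes Iset n" and c: "(\<phi>`Wset n = Wset n \<and> \<phi>`Mset n = Mset n) \<or> (\<phi>`Wset n = Mset n \<and> \<phi>`Mset n = Wset n)" by auto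
  have inj: "inj \<phi>" using p permutes_inj by blast
  have ii: "\<And>A. inv \<phi> ` (\<phi> ` A) = A" using inj by (simp add: image_inv_f_f)
  from c have "(inv \<phi>`Wset n = Wset n \<and> inv \<phi>`Mset n = Mset n) \<or> (inv \<phi>`Wset n = Mset n \<and> inv \<phi>`Mset n = Wset n)"
  proof
    assume h: "\<phi>`Wset n = Wset n \<and> \<phi>`Mset n = Mset n"
    have "inv \<phi>`Wset n = Wset n" using ii[of "Wset n"] h by simp
    moreover have "inv \<phi>`Mset n = Mset n" using ii[of "Mset n"] h by simp
    ultimately show ?thesis by blast
  next
    assume h: "\<phi>`Wset n = Mset n \<and> \<phi>`Mset n = Wset n"
    have "inv \<phi>`Mset n = Wset n" using ii[of "Wset n"] h by simp
    moreover have "inv \<phi>`Wset n = Mset n" using ii[of "Mset n"] h by simp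
    ultimately show ?thesis by blast
  qed
  then show ?thesis unfolding Gstar_def using permutes_inv[OF p] by auto
qed

lemma match_act_matchings:
  assumes "\<phi> \<in> Gstar n" "\<mu> \<in> matchings n"
  shows "match_act \<phi> \<mu> \<in> matchings n"
proof -
  from Gstar_cases[OF assms(1)] have p: "\<phi> permutes Iset n" and c: "(\<phi>`Wset n = Wset n \<and> \<phi>`Mset n = Mset n) \<or> (\<phi>`Wset n = Mset n \<and> \<phi>`Mset n = Wset n)" by auto
  from Gstar_cases[OF Gstar_inv[OF assms(1)]] have c2: "(inv \<phi>`Wset n = Wset n \<and> inv \<phi>`Mset n = Mset n) \<or> (inv \<phi>`Wset n = Mset n \<and> inv \<phi>`Mset n = Wset n)" by auto
  have m: "\<mu> permutes Iset n" "\<mu> ` Wset n = Mset n" "\<mu> ` Mset n = Wset n" "\<forall>z\<in>Iset n. \<mu> (\<mu> z) = z"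
    using assms(2) unfolding matchings_def by auto
  have "match_act \<phi> \<mu> permutes Iset n" unfolding match_act_def
    by (intro permutes_compose permutes_inv p m(1))
  moreover have "match_act \<phi> \<mu> ` Wset n = Mset n \<and> match_act \<phi> \<mu> ` Mset n = Wset n"
  proof -
    have e: "\<And>A. match_act \<phi> \<mu> ` A = \<phi> ` (\<mu> ` (inv \<phi> ` A))"
      unfolding match_act_def by (simp add: image_comp)
    have ii: "\<And>A. inv \<phi> ` (\<phi> ` A) = A" using permutes_inj[OF p] by (simp add: image_inv_f_f)
    from c show ?thesis
    proof
      assume h: "\<phi>`Wset n = Wset n \<and> \<phi>`Mset n = Mset n"
      then have h2: "inv \<phi>`Wset n = Wset n \<and> inv \<phi>`Mset n = Mset n"
        using h ii[of "Wset n"] ii[of "Mset n"] by simp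
      show ?thesis unfolding e using h h2 m(2,3) by simp
    next
      assume h: "\<phi>`Wset n = Mset n \<and> \<phi>`Mset n = Wset n"
      then have h2: "inv \<phi>`Wset n = Mset n \<and> inv \<phi>`Mset n = Wset n"
        using h ii[of "Wset n"] ii[of "Mset n"] by simp
      show ?thesis unfolding e using h h2 m(2,3) by simp
    qed
  qed
  moreover have "\<forall>z\<in>Iset n. match_act \<phi> \<mu> (match_act \<phi> \<mu> z) = z"
  proof
    fix z assume z: "z \<in> Iset n"
    have "inv \<phi> z \<in> Iset n" using z permutes_in_image[OF permutes_inv[OF p]] by blast
    then show "match_act \<phi> \<mu> (match_act \<phi> \<mu> z) = z"
      unfolding match_act_def using m(4) permutes_inverses[OF p] by simp
  qed
  ultimately show ?thesis unfolding matchings_def by auto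
qed

lemma spref_act:
  assumes "\<phi> permutes S"
  shows "spref (rel_act \<phi> R) a b \<longleftrightarrow> spref R (inv \<phi> a) (inv \<phi> b)"
proof -
  have "inj (inv \<phi>)" using permutes_inj[OF permutes_inv[OF assms]] .
  then show ?thesis unfolding spref_def rel_act_def by (auto dest: injD)
qed

lemma stable_act:
  assumes "\<phi> \<in> Gstar n" "stable n p \<mu>"
  shows "stable n (prof_act \<phi> p) (match_act \<phi> \<mu>)"
proof -
  from Gstar_cases[OF assms(1)] have p: "\<phi> permutes Iset n" by auto
  from Gstar_cases[OF Gstar_inv[OF assms(1)]] have c2: "(inv \<phi>`Wset n = Wset n \<and> inv \<phi>`Mset n = Mset n) \<or> (inv \<phi>`Wset n = Mset n \<and> inv \<phi>`Mset n = Wset n)" by auto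
  have ii: "\<And>x. inv \<phi> (\<phi> x) = x" using permutes_inverses[OF p] by simp
  show ?thesis unfolding stable_def
  proof
    assume "\<exists>x\<in>Wset n. \<exists>y\<in>Mset n. spref (prof_act \<phi> p x) y (match_act \<phi> \<mu> x) \<and> spref (prof_act \<phi> p y) x (match_act \<phi> \<mu> y)"
    then obtain x y where xy: "x \<in> Wset n" "y \<in> Mset n"
      "spref (p (inv \<phi> x)) (inv \<phi> y) (\<mu> (inv \<phi> x))" "spref (p (inv \<phi> y)) (inv \<phi> x) (\<mu> (inv \<phi> y))"
      unfolding prof_act_def match_act_def spref_act[OF p] by (auto simp: ii)
    from c2 show False
    proof
      assume "inv \<phi>`Wset n = Wset n \<and> inv \<phi>`Mset n = Mset n"
      then have "inv \<phi> x \<in> Wset n" "inv \<phi> y \<in> Mset n" using xy(1,2) by blast+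
      then show False using assms(2) xy(3,4) unfolding stable_def by blast
    next
      assume "inv \<phi>`Wset n = Mset n \<and> inv \<phi>`Mset n = Wset n"
      then have "inv \<phi> x \<in> Mset n" "inv \<phi> y \<in> Wset n" using xy(1,2) by blast+
      then show False using assms(2) xy(3,4) unfolding stable_def by blast
    qed
  qed
qed

lemma prof_rt:
  assumes "\<phi> permutes S"
  shows "prof_act (inv \<phi>) (prof_act \<phi> p) = p"
  using permutes_inverses[OF assms] permutes_inv_inv[OF assms]
  unfolding prof_act_def rel_act_def by auto

lemma match_rt:
  assumes "\<phi> permutes S"
  shows "match_act (inv \<phi>) (match_act \<phi> \<mu>) = \<mu>"
  using permutes_inverses[OF assms] permutes_inv_inv[OF assms]
  unfolding match_act_def by auto

lemma ST_act:
  assumes "\<phi> \<in> Gstar n"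
  shows "ST n (prof_act \<phi> p) = match_act \<phi> ` ST n p"
proof
  show "match_act \<phi> ` ST n p \<subseteq> ST n (prof_act \<phi> p)"
    using assms match_act_matchings stable_act unfolding ST_def by auto
next
  have p: "\<phi> permutes Iset n" using Gstar_cases[OF assms] by auto
  have ip: "inv \<phi> permutes Iset n" using permutes_inv[OF p] .
  show "ST n (prof_act \<phi> p) \<subseteq> match_act \<phi> ` ST n p"
  proof
    fix \<nu> assume \<nu>: "\<nu> \<in> ST n (prof_act \<phi> p)"
    have "match_act (inv \<phi>) \<nu> \<in> ST n (prof_act (inv \<phi>) (prof_act \<phi> p))"
      using \<nu> Gstar_inv[OF assms] match_act_matchings stable_act unfolding ST_def by auto
    then have "match_act (inv \<phi>) \<nu> \<in> ST n p" using prof_rt[OF p] by simp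
    moreover have "match_act \<phi> (match_act (inv \<phi>) \<nu>) = \<nu>"
      using match_rt[OF ip] permutes_inv_inv[OF p] by simp
    ultimately show "\<nu> \<in> match_act \<phi> ` ST n p" by (metis image_eqI)
  qed
qed

lemma Rank_act:
  assumes "\<phi> permutes S"
  shows "Rank (\<phi>`X) (rel_act \<phi> R) (\<phi> a) = Rank X R a"
proof -
  have inj: "inj \<phi>" using permutes_inj[OF assms] .
  have ii: "\<And>x. inv \<phi> (\<phi> x) = x" using permutes_inverses[OF assms] by simp
  have "{b \<in> \<phi>`X. (b, \<phi> a) \<in> rel_act \<phi> R} = \<phi> ` {b\<in>X. (b,a)\<in>R}"
    unfolding rel_act_def by (auto simp: ii)
  then show ?thesis unfolding Rank_def
    by (simp add: card_image inj_on_subset[OF inj])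
qed

lemma sum_act:
  assumes "\<phi> permutes S" "\<phi>`A = A'" "\<phi>`B = B'"
  shows "(\<Sum>x\<in>A'. Rank B' (prof_act \<phi> p x) (match_act \<phi> \<mu> x)) = (\<Sum>x\<in>A. Rank B (p x) (\<mu> x))"
proof -
  have inj: "inj \<phi>" using permutes_inj[OF assms(1)] .
  have ii: "\<And>x. inv \<phi> (\<phi> x) = x" using permutes_inverses[OF assms(1)] by simp
  have "(\<Sum>x\<in>A'. Rank B' (prof_act \<phi> p x) (match_act \<phi> \<mu> x))
      = (\<Sum>x\<in>A. Rank B' (prof_act \<phi> p (\<phi> x)) (match_act \<phi> \<mu> (\<phi> x)))"
    unfolding assms(2)[symmetric] by (simp add: sum.reindex inj_on_subset[OF inj])
  also have "\<dots> = (\<Sum>x\<in>A. Rank (\<phi>`B) (rel_act \<phi> (p x)) (\<phi> (\<mu> x)))"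
    unfolding prof_act_def match_act_def assms(3)[symmetric] by (simp add: ii)
  also have "\<dots> = (\<Sum>x\<in>A. Rank B (p x) (\<mu> x))"
    using Rank_act[OF assms(1)] by simp
  finally show ?thesis .
qed

lemma vals_act:
  assumes "\<phi> \<in> Gstar n"
  shows "delta n (prof_act \<phi> p) (match_act \<phi> \<mu>) = delta n p \<mu> \<and>
         egal n (prof_act \<phi> p) (match_act \<phi> \<mu>) = egal n p \<mu>"
proof -
  from Gstar_cases[OF assms] have p: "\<phi> permutes Iset n" and c: "(\<phi>`Wset n = Wset n \<and> \<phi>`Mset n = Mset n) \<or> (\<phi>`Wset n = Mset n \<and> \<phi>`Mset n = Wset n)" by auto
  from c show ?thesis
  proof
    assume h: "\<phi>`Wset n = Wset n \<and> \<phi>`Mset n = Mset n"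
    have "wsum n (prof_act \<phi> p) (match_act \<phi> \<mu>) = wsum n p \<mu>"
      unfolding wsum_def using sum_act[OF p, of "Wset n" "Wset n" "Mset n" "Mset n"] h by simp
    moreover have "msum n (prof_act \<phi> p) (match_act \<phi> \<mu>) = msum n p \<mu>"
      unfolding msum_def using sum_act[OF p, of "Mset n" "Mset n" "Wset n" "Wset n"] h by simp
    ultimately show ?thesis unfolding delta_def egal_def by simp
  next
    assume h: "\<phi>`Wset n = Mset n \<and> \<phi>`Mset n = Wset n"
    have "wsum n (prof_act \<phi> p) (match_act \<phi> \<mu>) = msum n p \<mu>"
      unfolding wsum_def msum_def using sum_act[OF p, of "Mset n" "Wset n" "Wset n" "Mset n"] h by simp
    moreover have "msum n (prof_act \<phi> p) (match_act \<phi> \<mu>) = wsum n p \<mu>"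
      unfolding wsum_def msum_def using sum_act[OF p, of "Wset n" "Mset n" "Mset n" "Wset n"] h by simp
    ultimately show ?thesis unfolding delta_def egal_def by simp
  qed
qed

lemma argmin_act:
  fixes v v' :: "(nat \<Rightarrow> nat) \<Rightarrow> 'a::linorder"
  assumes "S' = g ` S" "\<And>\<mu>. v' (g \<mu>) = v \<mu>"
  shows "{\<mu> \<in> S'. \<forall>\<nu>\<in>S'. v' \<mu> \<le> v' \<nu>} = g ` {\<mu> \<in> S. \<forall>\<nu>\<in>S. v \<mu> \<le> v \<nu>}"
  using assms by auto

theorem proposition10:
  fixes n :: nat
  assumes "n \<ge> 2"
  shows "symmetric_mech n (SE n) \<and> symmetric_mech n (ES n)"
proof -
  have "SE n (prof_act \<phi> p) = match_act \<phi> ` SE n p \<and> ES n (prof_act \<phi> p) = match_act \<phi> ` ES n p"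
    if "\<phi> \<in> Gstar n" for \<phi> p
  proof
    show "SE n (prof_act \<phi> p) = match_act \<phi> ` SE n p"
      unfolding SE_def by (rule argmin_act[OF ST_act[OF that]]) (simp add: vals_act[OF that])
    show "ES n (prof_act \<phi> p) = match_act \<phi> ` ES n p"
      unfolding ES_def by (rule argmin_act[OF ST_act[OF that]]) (simp add: vals_act[OF that])
  qed
  then show ?thesis unfolding symmetric_mech_def by blast
qed

end
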